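(* Let $\lambda_0,\dots,\lambda_n\in\mathbb{C}$, $n\ge1$, and $a\neq b$ real, and suppose $E_{(\lambda_0,\dots,\lambda_n)}$ and $E_{(\lambda_0,\dots,\lambda_{n-1})}$ are extended Chebyshev systems for $\{a,b\}$. For $k=0,\dots,n-1$ the limit $$d_k:=\lim_{x\to b}\frac{\frac{d}{dx}p_{(\lambda_0,\dots,\lambda_n),k}(x)}{p_{(\lambda_0,\dots,\lambda_{n-1}),k}(x)}$$ exists and is nonzero, and $$\Big(\frac{d}{dx}-\lambda_n\Big)p_{(\lambda_0,\dots,\lambda_n),k}=p_{(\lambda_0,\dots,\lambda_{n-1}),k-1}+d_k\,p_{(\lambda_0,\dots,\lambda_{n-1}),k}\quad\text{for }k=1,\dots,n-1,$$ while $(\frac{d}{dx}-\lambda_n)p_{(\lambda_0,\dots,\lambda_n),0}=d_0\,p_{(\lambda_0,\dots,\lambda_{n-1}),0}$ and $(\frac{d}{dx}-\lambda_n)p_{(\lambda_0,\dots,\lambda_n),n}=p_{(\lambda_0,\dots,\lambda_{n-1}),n-1}$.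
   Context: $E_{(\lambda_0,\dots,\lambda_m)}$ denotes the space of all $f\in C^\infty(\mathbb{R},\mathbb{C})$ with $(\frac{d}{dx}-\lambda_0)\cdots(\frac{d}{dx}-\lambda_m)f=0$ (dimension $m+1$). A zero of order (exactly) $k$ at $a$ means $f(a)=\dots=f^{(k-1)}(a)=0$, $f^{(k)}(a)\neq0$. $E_{(\lambda_0,\dots,\lambda_m)}$ is an extended Chebyshev system for $A\subset\mathbb{R}$ if every nonzero element has at most $m$ zeros in $A$ counted with multiplicity. In that case, for $A=\{a,b\}$, $a\ne b$, the Bernstein basis $p_{(\lambda_0,\dots,\lambda_m),k}$, $k=0,\dots,m$, is the unique family in $E_{(\lambda_0,\dots,\lambda_m)}$ with $p_{(\lambda_0,\dots,\lambda_m),k}$ having a zero of order exactly $k$ at $a$ and exactly $m-k$ at $b$, and $p^{(k)}_{(\lambda_0,\dots,\lambda_m),k}(a)=1$. *)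

theory Defs
  imports "HOL-Analysis.Analysis"
begin

fun nderiv :: "nat \<Rightarrow> (real \<Rightarrow> complex) \<Rightarrow> real \<Rightarrow> complex" where
  "nderiv 0 f = f"
| "nderiv (Suc k) f = (\<lambda>x. vector_derivative (nderiv k f) (at x))"

definition cinf :: "(real \<Rightarrow> complex) \<Rightarrow> bool" where
  "cinf f \<longleftrightarrow> (\<forall>k x. nderiv k f differentiable (at x))"

fun diffop :: "complex list \<Rightarrow> (real \<Rightarrow> complex) \<Rightarrow> real \<Rightarrow> complex" where
  "diffop [] f = f"
| "diffop (l # ls) f = (\<lambda>x. nderiv 1 (diffop ls f) x - l * diffop ls f x)"

definition Espace :: "complex list \<Rightarrow> (real \<Rightarrow> complex) set" where
  "Espace ls = {f. cinf f \<and> diffop ls f = (\<lambda>x. 0)}"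

definition zero_order :: "(real \<Rightarrow> complex) \<Rightarrow> real \<Rightarrow> nat \<Rightarrow> bool" where
  "zero_order f a k \<longleftrightarrow> (\<forall>j<k. nderiv j f a = 0) \<and> nderiv k f a \<noteq> 0"

text \<open>Extended Chebyshev system for A: every nonzero element has at most m zeros in A
  counted with multiplicity (m = length ls - 1): whenever f vanishes to order at least
  mult x at each point x of a finite S \<subseteq> A, the sum of the mult x is at most m.\<close>
definition ext_cheb :: "complex list \<Rightarrow> real set \<Rightarrow> bool" where
  "ext_cheb ls A \<longleftrightarrow>
     (\<forall>f\<in>Espace ls. f \<noteq> (\<lambda>x. 0) \<longrightarrow>
        (\<forall>S mult. finite S \<and> S \<subseteq> A \<and> (\<forall>x\<in>S. \<forall>j<mult x. nderiv j f x = 0)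
            \<longrightarrow> sum mult S \<le> length ls - 1))"

definition bern :: "complex list \<Rightarrow> real \<Rightarrow> real \<Rightarrow> nat \<Rightarrow> real \<Rightarrow> complex" where
  "bern ls a b k = (THE p. p \<in> Espace ls \<and> zero_order p a k
        \<and> zero_order p b (length ls - 1 - k) \<and> nderiv k p a = 1)"

end

theory Submission
  imports Defs "Jordan_Normal_Form.Determinant"
begin

lemma nderiv_Suc': "nderiv (Suc k) f = nderiv k (nderiv 1 f)"
  by (induction k) auto

lemma nderiv_1: "nderiv 1 f = (\<lambda>x. vector_derivative f (at x))"
  by simp

lemma D_lin:
  assumes "\<And>x. f differentiable at x" "\<And>x. g differentiable at x"
  shows "nderiv 1 (\<lambda>x. c * f x + d * g x) = (\<lambda>x. c * nderiv 1 f x + d * nderiv 1 g x)"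
proof
  fix x
  have "((\<lambda>x. c * f x + d * g x) has_vector_derivative (c * nderiv 1 f x + d * nderiv 1 g x)) (at x)"
    using assms by (auto intro!: derivative_eq_intros simp: vector_derivative_works[symmetric])
  then show "nderiv 1 (\<lambda>x. c * f x + d * g x) x = c * nderiv 1 f x + d * nderiv 1 g x"
    by (simp add: vector_derivative_at)
qed

lemma nderiv_lin:
  assumes "cinf f" "cinf g"
  shows "nderiv k (\<lambda>x. c * f x + d * g x) = (\<lambda>x. c * nderiv k f x + d * nderiv k g x)"
proof (induction k)
  case 0 then show ?case by simp
next
  case (Suc k)
  have "nderiv (Suc k) (\<lambda>x. c * f x + d * g x) = nderiv 1 (nderiv k (\<lambda>x. c * f x + d * g x))"
    by simp
  also have "\<dots> = nderiv 1 (\<lambda>x. c * nderiv k f x + d * nderiv k g x)" using Suc by simp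
  also have "\<dots> = (\<lambda>x. c * nderiv 1 (nderiv k f) x + d * nderiv 1 (nderiv k g) x)"
    using assms by (intro D_lin) (auto simp: cinf_def)
  finally show ?case by simp
qed

lemma diff_lin:
  fixes f g :: "real \<Rightarrow> complex"
  assumes "f differentiable at x" "g differentiable at x"
  shows "(\<lambda>x. c * f x + d * g x) differentiable at x"
proof -
  have "((\<lambda>x. c * f x + d * g x) has_vector_derivative
     (c * vector_derivative f (at x) + d * vector_derivative g (at x))) (at x)"
    using assms by (auto intro!: derivative_eq_intros simp: vector_derivative_works[symmetric])
  then show ?thesis by (rule differentiableI_vector)
qed

lemma cinf_diff: "cinf f \<Longrightarrow> f differentiable at x"
  unfolding cinf_def by (metis nderiv.simps(1))

lemma cinf_lin:
  assumes "cinf f" "cinf g"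
  shows "cinf (\<lambda>x. c * f x + d * g x)"
  unfolding cinf_def nderiv_lin[OF assms]
  using assms unfolding cinf_def
  by (auto intro!: diff_lin)

lemma cinf_D: "cinf f \<Longrightarrow> cinf (nderiv 1 f)"
  unfolding cinf_def by (metis nderiv_Suc')

lemma cinf_zero: "cinf (\<lambda>x. 0)"
proof -
  have "nderiv k (\<lambda>x. 0::complex) = (\<lambda>x. 0)" for k
    by (induction k) (auto simp: vector_derivative_at)
  then show ?thesis unfolding cinf_def by simp
qed

lemma nderiv_zero: "nderiv k (\<lambda>x. 0::complex) = (\<lambda>x. 0)"
    by (induction k) (auto simp: vector_derivative_at)

lemma diffop_snoc: "diffop (xs @ [l]) f = diffop xs (diffop [l] f)"
  by (induction xs) auto

lemma diffop_cinf: "cinf f \<Longrightarrow> cinf (diffop ls f)"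
proof (induction ls)
  case Nil then show ?case by simp
next
  case (Cons l ls)
  have e: "diffop (l # ls) f = (\<lambda>x. 1 * nderiv 1 (diffop ls f) x + (-l) * diffop ls f x)"
    by auto
  show ?case unfolding e using Cons by (intro cinf_lin cinf_D) auto
qed

lemma diffop_lin:
  assumes "cinf f" "cinf g"
  shows "diffop ls (\<lambda>x. c * f x + d * g x) = (\<lambda>x. c * diffop ls f x + d * diffop ls g x)"
proof (induction ls)
  case Nil then show ?case by simp
next
  case (Cons l ls)
  have "diffop (l # ls) (\<lambda>x. c * f x + d * g x)
      = (\<lambda>x. nderiv 1 (\<lambda>x. c * diffop ls f x + d * diffop ls g x) x
              - l * (c * diffop ls f x + d * diffop ls g x))"
    using Cons by simp
  also have "\<dots> = (\<lambda>x. (c * nderiv 1 (diffop ls f) x + d * nderiv 1 (diffop ls g) x)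
              - l * (c * diffop ls f x + d * diffop ls g x))"
    using diffop_cinf[OF assms(1), of ls] diffop_cinf[OF assms(2), of ls]
    by (subst D_lin) (auto simp: cinf_diff)
  finally show ?case by (simp add: algebra_simps)
qed

lemma Espace_lin:
  assumes "f \<in> Espace ls" "g \<in> Espace ls"
  shows "(\<lambda>x. c * f x + d * g x) \<in> Espace ls"
  using assms unfolding Espace_def by (auto simp: diffop_lin cinf_lin)

lemma diffop_zero: "diffop ls (\<lambda>x. 0) = (\<lambda>x. 0)"
  by (induction ls) (auto simp: vector_derivative_at)

lemma Espace_zero: "(\<lambda>x. 0) \<in> Espace ls"
  unfolding Espace_def by (simp add: cinf_zero diffop_zero)

lemma Espace_sum:
  fixes N :: nat and f :: "nat \<Rightarrow> real \<Rightarrow> complex"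
  assumes "\<And>j. j < N \<Longrightarrow> f j \<in> Espace ls"
  shows "(\<lambda>x. \<Sum>j<N. v j * f j x) \<in> Espace ls
     \<and> (\<forall>k. nderiv k (\<lambda>x. \<Sum>j<N. v j * f j x) = (\<lambda>x. \<Sum>j<N. v j * nderiv k (f j) x))"
  using assms
proof (induct N)
  case 0 then show ?case by (simp add: Espace_zero nderiv_zero)
next
  case (Suc N)
  have e: "(\<lambda>x. \<Sum>j<Suc N. v j * f j x) = (\<lambda>x. 1 * (\<Sum>j<N. v j * f j x) + v N * f N x)"
    by simp
  from Suc have IH: "(\<lambda>x. \<Sum>j<N. v j * f j x) \<in> Espace ls"
     "\<And>k. nderiv k (\<lambda>x. \<Sum>j<N. v j * f j x) = (\<lambda>x. \<Sum>j<N. v j * nderiv k (f j) x)" by auto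
  have fN: "f N \<in> Espace ls" using Suc by auto
  have A: "(\<lambda>x. (\<Sum>j<N. v j * f j x) + v N * f N x) \<in> Espace ls"
    using Espace_lin[OF IH(1) fN, of 1 "v N"] by simp
  have B: "nderiv k (\<lambda>x. (\<Sum>j<N. v j * f j x) + v N * f N x)
     = (\<lambda>x. (\<Sum>j<N. v j * nderiv k (f j) x) + v N * nderiv k (f N) x)" for k
    using nderiv_lin[of "\<lambda>x. \<Sum>j<N. v j * f j x" "f N" k 1 "v N"] IH fN by (simp add: Espace_def)
  show ?case using A B by simp
qed

lemma ode_solve:
  assumes g: "cinf g"
  shows "\<exists>f. cinf f \<and> nderiv 1 f = (\<lambda>x. l * f x + g x) \<and> f a = c"
proof -
  have gc: "isCont g x" for x
    using g unfolding cinf_def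
    by (metis differentiable_imp_continuous_within nderiv.simps(1))
  let ?h = "\<lambda>t. exp (- l * of_real t) * g t"
  have "isCont ?h x" for x
    by (intro continuous_intros gc)
  then obtain F where F: "\<And>x. (F has_vector_derivative ?h x) (at x)"
    using einterval_antiderivative[of "-\<infinity>" "\<infinity>" ?h] by auto
  define C where "C = c * exp (- l * of_real a) - F a"
  define f where "f = (\<lambda>x. exp (l * of_real x) * (F x + C))"
  have ex: "((\<lambda>x. exp (l * of_real x)) has_vector_derivative l * exp (l * of_real x)) (at x)" for x
  proof -
    have "((\<lambda>z. exp (l * z)) has_field_derivative l * exp (l * of_real x)) (at (of_real x))"
      by (auto intro!: derivative_eq_intros)
    then show ?thesis by (rule has_vector_derivative_real_field)
  qed
  have fd: "(f has_vector_derivative (l * f x + g x)) (at x)" for x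
  proof -
    have "(f has_vector_derivative (exp (l * of_real x) * ?h x + l * exp (l * of_real x) * (F x + C))) (at x)"
      unfolding f_def
      by (intro has_vector_derivative_mult ex) (insert F, simp add: has_vector_derivative_add_const)
    moreover have "exp (l * of_real x) * ?h x + l * exp (l * of_real x) * (F x + C) = l * f x + g x"
      by (simp add: f_def algebra_simps exp_minus field_simps exp_add[symmetric])
    ultimately show ?thesis by simp
  qed
  have D1: "nderiv 1 f = (\<lambda>x. l * f x + g x)"
    using fd by (auto simp: vector_derivative_at)
  have fa: "f a = c"
    by (simp add: f_def C_def exp_minus field_simps)
  have main: "nderiv (Suc k) f = (\<lambda>x. l * nderiv k f x + nderiv k g x) \<and> (\<forall>x. nderiv k f differentiable at x)" for k
  proof (induction k)
    case 0 then show ?case using D1 fd by (auto simp: differentiable_def has_vector_derivative_def)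
  next
    case (Suc k)
    have "nderiv (Suc (Suc k)) f = nderiv 1 (nderiv (Suc k) f)" by simp
    also have "\<dots> = nderiv 1 (\<lambda>x. l * nderiv k f x + 1 * nderiv k g x)" using Suc by simp
    also have "\<dots> = (\<lambda>x. l * nderiv 1 (nderiv k f) x + 1 * nderiv 1 (nderiv k g) x)"
      using Suc g by (intro D_lin) (auto simp: cinf_def)
    finally have 1: "nderiv (Suc (Suc k)) f = (\<lambda>x. l * nderiv (Suc k) f x + nderiv (Suc k) g x)"
      by simp
    have dl: "(\<lambda>x. l * nderiv k f x + nderiv k g x) differentiable at x" for x
      using Suc g unfolding cinf_def by (auto intro!: diff_lin[where d=1, simplified])
    from Suc.IH have e: "nderiv (Suc k) f = (\<lambda>x. l * nderiv k f x + nderiv k g x)" by blast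
    have 2: "\<forall>x. nderiv (Suc k) f differentiable at x" unfolding e using dl by blast
    show ?case using 1 2 by blast
  qed
  have "cinf f" unfolding cinf_def using main by blast
  then show ?thesis using D1 fa by blast
qed

lemma ivp:
  "\<exists>f \<in> Espace ls. \<forall>j < length ls. nderiv j f a = v j"
proof (induction ls arbitrary: v rule: rev_induct)
  case Nil then show ?case using Espace_zero by auto
next
  case (snoc l xs)
  obtain g where g: "g \<in> Espace xs" "\<And>j. j < length xs \<Longrightarrow> nderiv j g a = v (Suc j) - l * v j"
    using snoc.IH[of "\<lambda>j. v (Suc j) - l * v j"] by auto
  have gc: "cinf g" using g unfolding Espace_def by auto
  obtain f where f: "cinf f" "nderiv 1 f = (\<lambda>x. l * f x + g x)" "f a = v 0"
    using ode_solve[OF gc] by blast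
  have dop: "diffop [l] f = g" using f(2) by auto
  have "diffop (xs @ [l]) f = (\<lambda>x. 0)"
    unfolding diffop_snoc dop using g(1) by (simp add: Espace_def)
  then have fE: "f \<in> Espace (xs @ [l])"
    using f(1) unfolding Espace_def by simp
  have ns: "nderiv (Suc j) f = (\<lambda>x. l * nderiv j f x + 1 * nderiv j g x)" for j
    unfolding nderiv_Suc'[of j f] f(2) using nderiv_lin[OF f(1) gc, of j l 1] by simp
  have "j \<le> length xs \<Longrightarrow> nderiv j f a = v j" for j
  proof (induction j)
    case 0 then show ?case using f(3) by simp
  next
    case (Suc j)
    have "nderiv (Suc j) f a = l * nderiv j f a + nderiv j g a"
      using fun_cong[OF ns[of j], of a] by (simp only: mult_1)
    then show ?case using Suc g(2)[of j] by simp
  qed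
  then show ?case using fE by (intro bexI[of _ f]) (auto simp: less_Suc_eq_le)
qed

lemma cheb_zero:
  assumes "ext_cheb ls {a, b}" "a \<noteq> b" "f \<in> Espace ls"
    "\<forall>j<i. nderiv j f a = 0" "\<forall>j<r. nderiv j f b = 0" "i + r \<ge> length ls" "length ls > 0"
  shows "f = (\<lambda>x. 0)"
proof (rule ccontr)
  assume nz: "f \<noteq> (\<lambda>x. 0)"
  define mult where "mult = (\<lambda>x. if x = a then i else r)"
  have "\<forall>x\<in>{a,b}. \<forall>j<mult x. nderiv j f x = 0"
    using assms(2,4,5) by (auto simp: mult_def)
  moreover have "\<forall>S mult. finite S \<and> S \<subseteq> {a, b} \<and> (\<forall>x\<in>S. \<forall>j<mult x. nderiv j f x = 0)
            \<longrightarrow> sum mult S \<le> length ls - 1"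
    using assms(1,3) nz unfolding ext_cheb_def by auto
  ultimately have "sum mult {a, b} \<le> length ls - 1"
    by (meson finite.emptyI finite.insertI order_refl)
  moreover have "sum mult {a, b} = i + r" using assms(2) by (simp add: mult_def)
  ultimately show False using assms(6,7) by linarith
qed

lemma bern_unique:
  assumes "ext_cheb ls {a, b}" "a \<noteq> b" "length ls = m + 1" "k \<le> m"
    and p: "p \<in> Espace ls" "zero_order p a k" "zero_order p b (m - k)" "nderiv k p a = 1"
    and q: "q \<in> Espace ls" "zero_order q a k" "zero_order q b (m - k)" "nderiv k q a = 1"
  shows "p = q"
proof -
  define r where "r = (\<lambda>x. 1 * p x + (-1) * q x)"
  have rE: "r \<in> Espace ls" unfolding r_def using Espace_lin[OF p(1) q(1)] .
  have pc: "cinf p" "cinf q" using p(1) q(1) unfolding Espace_def by auto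
  have nd: "nderiv j r x = nderiv j p x - nderiv j q x" for j x
    unfolding r_def using nderiv_lin[OF pc, of j 1 "-1"] by simp
  have za: "\<forall>j<k+1. nderiv j r a = 0"
    using p(2,4) q(2,4) by (auto simp: nd zero_order_def less_Suc_eq)
  have zb: "\<forall>j<m-k. nderiv j r b = 0"
    using p(3) q(3) by (auto simp: nd zero_order_def)
  have "r = (\<lambda>x. 0)"
    by (rule cheb_zero[OF assms(1,2) rE za zb]) (use assms(3,4) in auto)
  then have "r x = 0" for x by simp
  then have "p x = q x" for x unfolding r_def by simp
  then show ?thesis by auto
qed


lemma bern_exists:
  assumes ch: "ext_cheb ls {a, b}" "a \<noteq> b" "length ls = m + 1" "k \<le> m"
  shows "\<exists>p. p \<in> Espace ls \<and> zero_order p a k \<and> zero_order p b (m - k) \<and> nderiv k p a = 1"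
proof -
  define N where "N = m + 1"
  have "\<exists>f \<in> Espace ls. \<forall>i<N. nderiv i f a = (if i = j then 1 else 0)" for j
    using ivp[of ls a "\<lambda>i. if i = j then 1 else 0"] ch(3) N_def by simp
  then have "\<forall>j. \<exists>f. f \<in> Espace ls \<and> (\<forall>i<N. nderiv i f a = (if i = j then 1 else 0))"
    by blast
  then obtain fb where fb: "\<And>j. fb j \<in> Espace ls"
      "\<And>j i. i < N \<Longrightarrow> nderiv i (fb j) a = (if i = j then 1 else 0)"
    by metis
  define psi where "psi = (\<lambda>i f. if i \<le> k then nderiv i f a else nderiv (i - k - 1) f b)"
  define M where "M = mat N N (\<lambda>(i,j). psi i (fb j))"
  define G where "G = (\<lambda>w::complex vec. \<lambda>x. \<Sum>j<N. w $ j * fb j x)"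
  have GE: "G w \<in> Espace ls \<and> (\<forall>t. nderiv t (G w) = (\<lambda>x. \<Sum>j<N. w$j * nderiv t (fb j) x))" for w
    unfolding G_def by (rule Espace_sum) (use fb in auto)
  have psiG: "psi i (G w) = (\<Sum>j<N. w$j * psi i (fb j))" for i w
    using GE[of w] by (simp add: psi_def)
  have MG: "(M *\<^sub>v w) $ i = psi i (G w)" if "i < N" "w \<in> carrier_vec N" for i w
    using that by (simp add: M_def psiG scalar_prod_def row_def atLeast0LessThan mult.commute)
  have Mc: "M \<in> carrier_mat N N" by (simp add: M_def)
  have inj: "w = 0\<^sub>v N" if w: "w \<in> carrier_vec N" "M *\<^sub>v w = 0\<^sub>v N" for w
  proof -
    have z: "psi i (G w) = 0" if "i < N" for i
      using MG[OF that w(1)] w(2) that by simp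
    have za: "\<forall>j<k+1. nderiv j (G w) a = 0"
    proof (intro allI impI)
      fix j assume "j < k + 1"
      then have "j < N" "j \<le> k" using ch(4) N_def by auto
      then show "nderiv j (G w) a = 0" using z[of j] by (simp add: psi_def)
    qed
    have zb: "\<forall>j<m-k. nderiv j (G w) b = 0"
    proof (intro allI impI)
      fix j assume "j < m - k"
      then have "j + k + 1 < N" "\<not> j + k + 1 \<le> k" using ch(4) N_def by auto
      then show "nderiv j (G w) b = 0" using z[of "j + k + 1"] by (simp add: psi_def)
    qed
    have "G w = (\<lambda>x. 0)"
      by (rule cheb_zero[OF ch(1,2) _ za zb]) (use GE ch in auto)
    then have 1: "nderiv i (G w) a = 0" for i by (simp add: nderiv_zero)
    have 2: "nderiv i (G w) a = w $ i" if "i < N" for i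
    proof -
      have "nderiv i (G w) a = (\<Sum>j<N. w$j * nderiv i (fb j) a)" using GE[of w] by simp
      also have "\<dots> = (\<Sum>j<N. if j = i then w$j else 0)"
        by (rule sum.cong) (auto simp: fb(2)[OF that])
      also have "\<dots> = w $ i" using that by simp
      finally show ?thesis .
    qed
    show "w = 0\<^sub>v N" using w(1) 1 2 by (intro eq_vecI) auto
  qed
  have "Determinant.det M \<noteq> 0" using det_0_iff_vec_prod_zero_field[OF Mc] inj by auto
  then have "M \<in> Units (ring_mat TYPE(complex) N ())" by (rule det_non_zero_imp_unit[OF Mc])
  then obtain B where B: "B \<in> carrier_mat N N" "M * B = 1\<^sub>m N"
    by (auto simp: Units_def ring_mat_def)
  define w where "w = B *\<^sub>v unit_vec N k"
  have wc: "w \<in> carrier_vec N" unfolding w_def by (rule mult_mat_vec_carrier[OF B(1)]) simp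
  have "M *\<^sub>v w = (M * B) *\<^sub>v unit_vec N k"
    unfolding w_def using Mc B(1) by (simp add: assoc_mult_mat_vec)
  then have Mw: "M *\<^sub>v w = unit_vec N k" using B(2) by simp
  define p where "p = G w"
  have pv: "psi i p = (if i = k then 1 else 0)" if "i < N" for i
    using MG[OF that wc] Mw that ch(4) N_def by (simp add: p_def)
  have pE: "p \<in> Espace ls" using GE p_def by simp
  have pa: "\<forall>j<k. nderiv j p a = 0"
  proof (intro allI impI)
    fix j assume "j < k" then show "nderiv j p a = 0" using pv[of j] ch(4) N_def by (simp add: psi_def)
  qed
  have pk: "nderiv k p a = 1" using pv[of k] ch(4) N_def by (simp add: psi_def)
  have pb: "\<forall>j<m-k. nderiv j p b = 0"
  proof (intro allI impI)
    fix j assume "j < m - k"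
    then have "j + k + 1 < N" "\<not> j + k + 1 \<le> k" "j + k + 1 \<noteq> k" using ch(4) N_def by auto
    then show "nderiv j p b = 0" using pv[of "j + k + 1"] by (simp add: psi_def)
  qed
  have pbn: "nderiv (m - k) p b \<noteq> 0"
  proof
    assume 0: "nderiv (m - k) p b = 0"
    have "\<forall>j<m-k+1. nderiv j p b = 0" using pb 0 less_Suc_eq by auto
    then have "p = (\<lambda>x. 0)"
      by (intro cheb_zero[OF ch(1,2) pE pa]) (use ch in auto)
    then show False using pk by (simp add: nderiv_zero)
  qed
  show ?thesis using pE pa pk pb pbn by (auto simp: zero_order_def)
qed

lemma bern_props:
  assumes ch: "ext_cheb ls {a, b}" "a \<noteq> b" "length ls = m + 1" "k \<le> m"
  shows "bern ls a b k \<in> Espace ls \<and> zero_order (bern ls a b k) a k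
     \<and> zero_order (bern ls a b k) b (m - k) \<and> nderiv k (bern ls a b k) a = 1"
proof -
  have e: "length ls - 1 - k = m - k" using ch(3) by simp
  have "\<exists>!p. p \<in> Espace ls \<and> zero_order p a k \<and> zero_order p b (m - k) \<and> nderiv k p a = 1"
    using bern_exists[OF ch] bern_unique[OF ch] by blast
  then show ?thesis unfolding bern_def e by (rule theI')
qed

lemma real_taylor_lim:
  fixes diff :: "nat \<Rightarrow> real \<Rightarrow> real"
  assumes "m > 0" "\<And>i t. i < m \<Longrightarrow> DERIV (diff i) t :> diff (Suc i) t"
    "\<And>i. i < m \<Longrightarrow> diff i b = 0" "isCont (diff m) b"
  shows "((\<lambda>x. diff 0 x / (x - b)^m) \<longlongrightarrow> diff m b / fact m) (at b)"
proof -
  have T: "\<exists>t. \<bar>t - b\<bar> < \<bar>x - b\<bar> \<and> diff 0 x / (x-b)^m = diff m t / fact m" if "x \<noteq> b" for x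
  proof -
    have "\<exists>t. (if x < b then x < t \<and> t < b else b < t \<and> t < x) \<and>
      diff 0 x = (\<Sum>i<m. diff i b / fact i * (x-b)^i) + diff m t / fact m * (x-b)^m"
      by (rule Taylor[of m diff "diff 0" "b - \<bar>x-b\<bar> - 1" "b + \<bar>x-b\<bar> + 1" b x]) (use assms that in auto)
    then obtain t where t: "(if x < b then x < t \<and> t < b else b < t \<and> t < x)"
      "diff 0 x = (\<Sum>i<m. diff i b / fact i * (x-b)^i) + diff m t / fact m * (x-b)^m"
      by blast
    have "(\<Sum>i<m. diff i b / fact i * (x-b)^i) = 0" using assms(3) by simp
    then have "diff 0 x / (x-b)^m = diff m t / fact m" using t(2) that by simp
    moreover have "\<bar>t-b\<bar> < \<bar>x-b\<bar>" using t(1) by (auto split: if_splits)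
    ultimately show ?thesis by blast
  qed
  show ?thesis unfolding LIM_eq
  proof (intro allI impI)
    fix r :: real assume r: "r > 0"
    have fp: "fact m > (0::real)" by simp
    obtain s where s: "s > 0" "\<And>t. t \<noteq> b \<and> norm (t - b) < s \<Longrightarrow> norm (diff m t - diff m b) < r * fact m"
      using LIM_D[OF assms(4)[unfolded isCont_def], of "r * fact m"] r fp by auto
    have "norm (diff 0 x / (x - b)^m - diff m b / fact m) < r" if "x \<noteq> b \<and> norm (x - b) < s" for x
    proof -
      have xb: "x \<noteq> b" using that by simp
      obtain t where t: "\<bar>t - b\<bar> < \<bar>x - b\<bar>" "diff 0 x / (x-b)^m = diff m t / fact m"
        using T[OF xb] by blast
      have "\<bar>diff m t - diff m b\<bar> < r * fact m"
      proof (cases "t = b")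
        case True then show ?thesis using r fp by simp
      next
        case False then show ?thesis using s(2)[of t] t(1) that by auto
      qed
      then have "\<bar>diff m t - diff m b\<bar> / fact m < r" using fp by (simp add: divide_less_eq)
      then show ?thesis using t(2) by (simp add: diff_divide_distrib[symmetric])
    qed
    then show "\<exists>s>0. \<forall>x. x \<noteq> b \<and> norm (x - b) < s \<longrightarrow> norm (diff 0 x / (x - b)^m - diff m b / fact m) < r"
      using s(1) by blast
  qed
qed

lemma nderiv_hvd: "cinf f \<Longrightarrow> (nderiv i f has_vector_derivative nderiv (Suc i) f t) (at t)"
  unfolding cinf_def by (simp add: vector_derivative_works[symmetric])

lemma cx_taylor_lim:
  assumes f: "cinf f" and z: "\<And>j. j < m \<Longrightarrow> nderiv j f b = 0"
  shows "((\<lambda>x. f x / of_real ((x - b)^m)) \<longlongrightarrow> nderiv m f b / of_real (fact m)) (at b)"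
proof (cases "m = 0")
  case True
  have "isCont f b" using cinf_diff[OF f] by (simp add: differentiable_imp_continuous_within)
  then show ?thesis using True by (simp add: isCont_def)
next
  case False
  have cm: "isCont (nderiv m f) b"
    using f unfolding cinf_def by (simp add: differentiable_imp_continuous_within)
  have re: "((\<lambda>x. Re (f x) / (x - b)^m) \<longlongrightarrow> Re (nderiv m f b) / fact m) (at b)"
    using real_taylor_lim[of m "\<lambda>i t. Re (nderiv i f t)" b] False
  proof -
    have "DERIV (\<lambda>t. Re (nderiv i f t)) t :> Re (nderiv (Suc i) f t)" for i t
      using bounded_linear.has_vector_derivative[OF bounded_linear_Re nderiv_hvd[OF f, of i t]]
      by (simp add: has_real_derivative_iff_has_vector_derivative)
    moreover have "isCont (\<lambda>t. Re (nderiv m f t)) b" using cm by (rule isCont_Re)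
    ultimately show ?thesis using real_taylor_lim[of m "\<lambda>i t. Re (nderiv i f t)" b] False z by simp
  qed
  have im: "((\<lambda>x. Im (f x) / (x - b)^m) \<longlongrightarrow> Im (nderiv m f b) / fact m) (at b)"
  proof -
    have "DERIV (\<lambda>t. Im (nderiv i f t)) t :> Im (nderiv (Suc i) f t)" for i t
      using bounded_linear.has_vector_derivative[OF bounded_linear_Im nderiv_hvd[OF f, of i t]]
      by (simp add: has_real_derivative_iff_has_vector_derivative)
    moreover have "isCont (\<lambda>t. Im (nderiv m f t)) b" using cm by (rule isCont_Im)
    ultimately show ?thesis using real_taylor_lim[of m "\<lambda>i t. Im (nderiv i f t)" b] False z by simp
  qed
  show ?thesis unfolding tendsto_complex_iff Re_divide_of_real Im_divide_of_real using re im by blast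
qed

lemma ratio_lim:
  assumes f: "cinf f" and g: "cinf g" and zf: "\<And>j. j < r \<Longrightarrow> nderiv j f b = 0"
    and zg: "\<And>j. j < r \<Longrightarrow> nderiv j g b = 0" and nz: "nderiv r g b \<noteq> 0"
  shows "((\<lambda>x. f x / g x) \<longlongrightarrow> nderiv r f b / nderiv r g b) (at b)"
proof -
  have fr: "complex_of_real (fact r) \<noteq> 0" by simp
  have nz2: "nderiv r g b / of_real (fact r) \<noteq> 0" using nz fr by simp
  have L: "((\<lambda>x. (f x / of_real ((x - b)^r)) / (g x / of_real ((x - b)^r))) \<longlongrightarrow>
      (nderiv r f b / of_real (fact r)) / (nderiv r g b / of_real (fact r))) (at b)"
    by (rule tendsto_divide[OF cx_taylor_lim[OF f zf] cx_taylor_lim[OF g zg] nz2])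
  have e: "(nderiv r f b / of_real (fact r)) / (nderiv r g b / of_real (fact r)) = nderiv r f b / nderiv r g b"
    using fr by simp
  have ev: "\<forall>\<^sub>F x in at b. (f x / of_real ((x - b)^r)) / (g x / of_real ((x - b)^r)) = f x / g x"
    unfolding eventually_at by (intro exI[of _ 1]) auto
  show ?thesis using Lim_transform_eventually[OF L[unfolded e] ev] .
qed


theorem mainTheorem8:
  fixes ls :: "complex list" and n :: nat and a b :: real
  assumes "length ls = n + 1" and "n \<ge> 1" and "a \<noteq> b"
    and "ext_cheb ls {a, b}" and "ext_cheb (butlast ls) {a, b}"
  shows "\<exists>d :: nat \<Rightarrow> complex.
     (\<forall>k<n. d k \<noteq> 0 \<and>
        ((\<lambda>x. nderiv 1 (bern ls a b k) x / bern (butlast ls) a b k x) \<longlongrightarrow> d k) (at b))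
   \<and> (\<forall>k. 1 \<le> k \<and> k \<le> n - 1 \<longrightarrow>
        diffop [last ls] (bern ls a b k)
          = (\<lambda>x. bern (butlast ls) a b (k - 1) x + d k * bern (butlast ls) a b k x))
   \<and> diffop [last ls] (bern ls a b 0) = (\<lambda>x. d 0 * bern (butlast ls) a b 0 x)
   \<and> diffop [last ls] (bern ls a b n) = bern (butlast ls) a b (n - 1)"
proof -
  have ls_ne: "ls \<noteq> []" using assms(1) by auto
  define lam where "lam = last ls"
  define bl where "bl = butlast ls"
  have lsd: "ls = bl @ [lam]" using ls_ne by (simp add: bl_def lam_def)
  have lbl: "length bl = (n - 1) + 1" using assms(1,2) by (simp add: bl_def)
  have lbl': "length bl = n" using assms(1,2) by (simp add: bl_def)
  have chb: "ext_cheb bl {a, b}" using assms(5) by (simp add: bl_def)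
  define P where "P = bern ls a b"
  define Q where "Q = bern bl a b"
  have Pp: "P k \<in> Espace ls \<and> zero_order (P k) a k \<and> zero_order (P k) b (n - k) \<and> nderiv k (P k) a = 1"
    if "k \<le> n" for k
    using bern_props[OF assms(4,3,1) that] P_def by blast
  have Qp: "Q k \<in> Espace bl \<and> zero_order (Q k) a k \<and> zero_order (Q k) b (n - 1 - k) \<and> nderiv k (Q k) a = 1"
    if "k \<le> n - 1" for k
    using bern_props[OF chb assms(3) lbl that] Q_def by blast
  have Pc: "cinf (P k)" if "k \<le> n" for k using Pp[OF that] by (simp add: Espace_def)
  have Qc: "cinf (Q k)" if "k \<le> n - 1" for k using Qp[OF that] by (simp add: Espace_def)
  define q where "q = (\<lambda>k. diffop [lam] (P k))"
  have qE: "q k \<in> Espace bl" if "k \<le> n" for k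
  proof -
    have "diffop bl (q k) = diffop ls (P k)" unfolding q_def lsd diffop_snoc ..
    also have "\<dots> = (\<lambda>x. 0)" using Pp[OF that] by (simp add: Espace_def)
    finally show ?thesis using diffop_cinf[OF Pc[OF that], of "[lam]"] by (simp add: Espace_def q_def)
  qed
  have qc: "cinf (q k)" if "k \<le> n" for k using qE[OF that] by (simp add: Espace_def)
  have qd: "nderiv j (q k) x = nderiv (Suc j) (P k) x - lam * nderiv j (P k) x" if "k \<le> n" for k j x
  proof -
    have qe: "q k = (\<lambda>x. 1 * nderiv 1 (P k) x + (-lam) * P k x)" by (auto simp: q_def)
    have e2: "nderiv j (q k) = (\<lambda>x. 1 * nderiv j (nderiv 1 (P k)) x + (-lam) * nderiv j (P k) x)"
      unfolding qe by (rule nderiv_lin[OF cinf_D[OF Pc[OF that]] Pc[OF that]])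
    have "nderiv j (q k) x = 1 * nderiv j (nderiv 1 (P k)) x + (-lam) * nderiv j (P k) x"
      by (simp only: e2)
    then show ?thesis using nderiv_Suc'[of j "P k"] by simp
  qed
  have lin: "nderiv j (\<lambda>x. c * f x + e * g x) x = c * nderiv j f x + e * nderiv j g x"
    if "cinf f" "cinf g" for f g j x c e
    using nderiv_lin[OF that] by simp
  define d where "d = (\<lambda>k. nderiv (n - k) (P k) b / nderiv (n - 1 - k) (Q k) b)"
  have lim: "d k \<noteq> 0 \<and> ((\<lambda>x. nderiv 1 (P k) x / Q k x) \<longlongrightarrow> d k) (at b)" if "k < n" for k
  proof -
    have k: "k \<le> n" "k \<le> n - 1" using that by auto
    have Pz: "nderiv (n - k) (P k) b \<noteq> 0" "\<And>j. j < n - k \<Longrightarrow> nderiv j (P k) b = 0"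
      using Pp[OF k(1)] by (auto simp: zero_order_def)
    have Qz: "nderiv (n - 1 - k) (Q k) b \<noteq> 0" "\<And>j. j < n - 1 - k \<Longrightarrow> nderiv j (Q k) b = 0"
      using Qp[OF k(2)] by (auto simp: zero_order_def)
    have zf: "nderiv j (nderiv 1 (P k)) b = 0" if "j < n - 1 - k" for j
    proof -
      have "nderiv j (nderiv 1 (P k)) b = nderiv (Suc j) (P k) b" by (simp only: nderiv_Suc')
      also have "\<dots> = 0" by (rule Pz(2)) (use that in linarith)
      finally show ?thesis .
    qed
    have "((\<lambda>x. nderiv 1 (P k) x / Q k x) \<longlongrightarrow>
       nderiv (n - 1 - k) (nderiv 1 (P k)) b / nderiv (n - 1 - k) (Q k) b) (at b)"
      by (rule ratio_lim[OF cinf_D[OF Pc[OF k(1)]] Qc[OF k(2)] zf Qz(2) Qz(1)])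
    moreover have "nderiv (n - 1 - k) (nderiv 1 (P k)) b = nderiv (n - k) (P k) b"
    proof -
      have e: "Suc (n - 1 - k) = n - k" using that by simp
      have "nderiv (n - 1 - k) (nderiv 1 (P k)) b = nderiv (Suc (n - 1 - k)) (P k) b"
        by (simp only: nderiv_Suc')
      then show ?thesis unfolding e .
    qed
    ultimately show ?thesis using Pz(1) Qz(1) by (simp add: d_def)
  qed
  have mid: "q k = (\<lambda>x. Q (k - 1) x + d k * Q k x)" if "1 \<le> k" "k \<le> n - 1" for k
  proof -
    have k: "k \<le> n" "k - 1 \<le> n - 1" "k \<le> n - 1" using that by auto
    define r1 where "r1 = (\<lambda>x. 1 * q k x + (-1) * Q (k - 1) x)"
    define r where "r = (\<lambda>x. 1 * r1 x + (- d k) * Q k x)"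
    have r1E: "r1 \<in> Espace bl" unfolding r1_def by (rule Espace_lin[OF qE[OF k(1)] Qp[OF k(2), THEN conjunct1]])
    have rE: "r \<in> Espace bl" unfolding r_def by (rule Espace_lin[OF r1E Qp[OF k(3), THEN conjunct1]])
    have r1c: "cinf r1" using r1E by (simp add: Espace_def)
    have rd: "nderiv j r x = nderiv j (q k) x - nderiv j (Q (k - 1)) x - d k * nderiv j (Q k) x" for j x
      unfolding r_def r1_def
      using lin[OF r1c[unfolded r1_def] Qc[OF k(3)], where j=j and x=x and c=1 and e="- d k"]
        lin[OF qc[OF k(1)] Qc[OF k(2)], where j=j and x=x and c=1 and e="-1"] by simp
    have P1: "\<And>j. j < k \<Longrightarrow> nderiv j (P k) a = 0" "nderiv k (P k) a = 1"
      "\<And>j. j < n - k \<Longrightarrow> nderiv j (P k) b = 0"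
      using Pp[OF k(1)] by (auto simp: zero_order_def)
    have Q1: "\<And>j. j < k - 1 \<Longrightarrow> nderiv j (Q (k - 1)) a = 0" "nderiv (k - 1) (Q (k - 1)) a = 1"
      "\<And>j. j < n - 1 - (k - 1) \<Longrightarrow> nderiv j (Q (k - 1)) b = 0"
      using Qp[OF k(2)] by (auto simp: zero_order_def)
    have Q2: "\<And>j. j < k \<Longrightarrow> nderiv j (Q k) a = 0"
      "\<And>j. j < n - 1 - k \<Longrightarrow> nderiv j (Q k) b = 0" "nderiv (n - 1 - k) (Q k) b \<noteq> 0"
      using Qp[OF k(3)] by (auto simp: zero_order_def)
    have za: "\<forall>j<k. nderiv j r a = 0"
    proof (intro allI impI)
      fix j assume j: "j < k"
      show "nderiv j r a = 0"
      proof (cases "j < k - 1")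
        case True
        then show ?thesis using P1(1)[of j] P1(1)[of "Suc j"] Q1(1)[of j] Q2(1)[of j] j
          by (simp add: rd qd[OF k(1)])
      next
        case False
        then have jk: "j = k - 1" "Suc j = k" using j by auto
        show ?thesis using P1(1)[of j] P1(2) Q1(2) Q2(1)[of j] j jk
          by (simp add: rd qd[OF k(1)])
      qed
    qed
    have zb: "\<forall>j<n-k. nderiv j r b = 0"
    proof (intro allI impI)
      fix j assume j: "j < n - k"
      have q1: "nderiv j (Q (k - 1)) b = 0" using Q1(3)[of j] j that by auto
      show "nderiv j r b = 0"
      proof (cases "j < n - 1 - k")
        case True
        then show ?thesis using P1(3)[of j] P1(3)[of "Suc j"] q1 Q2(2)[of j] j
          by (simp add: rd qd[OF k(1)])
      next
        case False
        then have jk: "j = n - 1 - k" "Suc j = n - k" using j by auto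
        show ?thesis using P1(3)[of j] q1 Q2(3) j jk
          by (simp add: rd qd[OF k(1)] d_def)
      qed
    qed
    have "r = (\<lambda>x. 0)"
      by (rule cheb_zero[OF chb assms(3) rE za zb]) (use lbl' that in auto)
    then have "r x = 0" for x by simp
    then have "q k x = Q (k - 1) x + d k * Q k x" for x
      unfolding r_def r1_def by (simp add: algebra_simps)
    then show ?thesis by auto
  qed
  have bot: "q 0 = (\<lambda>x. d 0 * Q 0 x)"
  proof -
    have k: "0 \<le> n" "0 \<le> n - 1" by auto
    define r where "r = (\<lambda>x. 1 * q 0 x + (- d 0) * Q 0 x)"
    have rE: "r \<in> Espace bl" unfolding r_def by (rule Espace_lin[OF qE[OF k(1)] Qp[OF k(2), THEN conjunct1]])
    have rd: "nderiv j r x = nderiv j (q 0) x - d 0 * nderiv j (Q 0) x" for j x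
      unfolding r_def using lin[OF qc[OF k(1)] Qc[OF k(2)], where j=j and x=x and c=1 and e="- d 0"] by simp
    have P1: "\<And>j. j < n \<Longrightarrow> nderiv j (P 0) b = 0"
      using Pp[OF k(1)] by (auto simp: zero_order_def)
    have Q2: "\<And>j. j < n - 1 \<Longrightarrow> nderiv j (Q 0) b = 0" "nderiv (n - 1) (Q 0) b \<noteq> 0"
      using Qp[OF k(2)] by (auto simp: zero_order_def)
    have zb: "\<forall>j<n. nderiv j r b = 0"
    proof (intro allI impI)
      fix j assume j: "j < n"
      show "nderiv j r b = 0"
      proof (cases "j < n - 1")
        case True
        then show ?thesis using P1[of j] P1[of "Suc j"] Q2(1)[of j] j
          by (simp add: rd qd[OF k(1)])
      next
        case False
        then have jk: "j = n - 1" "Suc j = n" using j by auto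
        show ?thesis using P1[of j] Q2(2) j jk
          by (simp add: rd qd[OF k(1)] d_def)
      qed
    qed
    have "r = (\<lambda>x. 0)"
      by (rule cheb_zero[OF chb assms(3) rE _ zb]) (use lbl' assms(2) in auto)
    then have "r x = 0" for x by simp
    then have "q 0 x = d 0 * Q 0 x" for x
      unfolding r_def by (simp add: algebra_simps)
    then show ?thesis by auto
  qed
  have top: "q n = Q (n - 1)"
  proof -
    have k: "n \<le> n" "n - 1 \<le> n - 1" by auto
    define r where "r = (\<lambda>x. 1 * q n x + (- 1) * Q (n - 1) x)"
    have rE: "r \<in> Espace bl" unfolding r_def by (rule Espace_lin[OF qE[OF k(1)] Qp[OF k(2), THEN conjunct1]])
    have rd: "nderiv j r x = nderiv j (q n) x - nderiv j (Q (n - 1)) x" for j x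
      unfolding r_def using lin[OF qc[OF k(1)] Qc[OF k(2)], where j=j and x=x and c=1 and e="- 1"] by simp
    have P1: "\<And>j. j < n \<Longrightarrow> nderiv j (P n) a = 0" "nderiv n (P n) a = 1"
      using Pp[OF k(1)] by (auto simp: zero_order_def)
    have Q2: "\<And>j. j < n - 1 \<Longrightarrow> nderiv j (Q (n - 1)) a = 0" "nderiv (n - 1) (Q (n - 1)) a = 1"
      using Qp[OF k(2)] by (auto simp: zero_order_def)
    have za: "\<forall>j<n. nderiv j r a = 0"
    proof (intro allI impI)
      fix j assume j: "j < n"
      show "nderiv j r a = 0"
      proof (cases "j < n - 1")
        case True
        then show ?thesis using P1(1)[of j] P1(1)[of "Suc j"] Q2(1)[of j] j
          by (simp add: rd qd[OF k(1)])
      next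
        case False
        then have jk: "j = n - 1" "Suc j = n" using j by auto
        show ?thesis using P1(1)[of j] P1(2) Q2(2) j jk
          by (simp add: rd qd[OF k(1)])
      qed
    qed
    have "r = (\<lambda>x. 0)"
      by (rule cheb_zero[OF chb assms(3) rE za]) (use lbl' assms(2) in auto)
    then have "r x = 0" for x by simp
    then have "q n x = Q (n - 1) x" for x
      unfolding r_def by (simp add: algebra_simps)
    then show ?thesis by auto
  qed
  show ?thesis
    apply (rule exI[of _ d])
    using lim mid bot top unfolding q_def P_def Q_def lam_def bl_def by blast
qed

end
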